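(* Let $T\in(0,\infty)$ and let $\big(\Omega,\mathscr{F},(\mathscr{F}_t)_{t\in[0,T]},\mathbf{P}\big)$ be a complete filtered probability space with $\mathscr{F}_T=\mathscr{F}$, whose filtration satisfies the usual conditions. Let $S$ be an adapted $d$-dimensional process with continuous paths and values in $(0,\infty)^d$. If $S$ is sticky, then for every stopping time $\tau\in[0,T]$ and every $\mathscr{F}_\tau$-measurable random variable $\eta\ge 0$, $$\mathbf{P}[S^\star_\tau<\eta\mid\mathscr{F}_\tau]>0\quad\text{almost surely on }\{\eta>0\},$$ i.e. $\mathbf{P}\big[\{\mathbf{P}[S^\star_\tau<\eta\mid\mathscr{F}_\tau]>0\}\cap\{\eta>0\}\big]=\mathbf{P}[\eta>0]$.
   Context: For $x\in\mathbb{R}^d$ let $\|x\|=\max(|x_1|,\ldots,|x_d|)$. For a stopping time $\tau\in[0,T]$ write $S^\star_\tau=\sup_{u\in[\tau,T]}\|S_u-S_\tau\|$. The process $S$ is called sticky if for every deterministic $t\in[0,T)$ and every $\delta>0$, $\mathbf{P}[S^\star_t<\delta\mid\mathscr{F}_t]>0$ almost surely. *)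

theory Defs
  imports "HOL-Probability.Probability"
begin

definition maxnorm :: "real ^ 'd \<Rightarrow> real" where
  "maxnorm x = Max (range (\<lambda>i. \<bar>x $ i\<bar>))"

definition filtered_prob_space_usual ::
    "'a measure \<Rightarrow> (real \<Rightarrow> 'a measure) \<Rightarrow> real \<Rightarrow> bool" where
  "filtered_prob_space_usual M F T \<longleftrightarrow>
     prob_space M \<and> complete_measure M \<and> 0 < T \<and>
     (\<forall>t\<in>{0..T}. subalgebra M (F t)) \<and>
     (\<forall>s\<in>{0..T}. \<forall>t\<in>{0..T}. s \<le> t \<longrightarrow> sets (F s) \<subseteq> sets (F t)) \<and>
     sets (F T) = sets M \<and>
     (\<forall>t\<in>{0..<T}. sets (F t) = (\<Inter>s\<in>{t<..T}. sets (F s))) \<and>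
     null_sets M \<subseteq> sets (F 0)"

definition stopping_time_on ::
    "'a measure \<Rightarrow> (real \<Rightarrow> 'a measure) \<Rightarrow> real \<Rightarrow> ('a \<Rightarrow> real) \<Rightarrow> bool" where
  "stopping_time_on M F T \<tau> \<longleftrightarrow>
     (\<forall>\<omega>\<in>space M. \<tau> \<omega> \<in> {0..T}) \<and>
     (\<forall>t\<in>{0..T}. {\<omega>\<in>space M. \<tau> \<omega> \<le> t} \<in> sets (F t))"

definition stopped_sigma ::
    "'a measure \<Rightarrow> (real \<Rightarrow> 'a measure) \<Rightarrow> real \<Rightarrow> ('a \<Rightarrow> real) \<Rightarrow> 'a measure" where
  "stopped_sigma M F T \<tau> =
     sigma (space M) {A \<in> sets M. \<forall>t\<in>{0..T}. {\<omega>\<in>A. \<tau> \<omega> \<le> t} \<in> sets (F t)}"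

definition condP :: "'a measure \<Rightarrow> 'a measure \<Rightarrow> 'a set \<Rightarrow> 'a \<Rightarrow> real" where
  "condP M G A = real_cond_exp M G (indicator A)"

definition Sstar :: "(real \<Rightarrow> 'a \<Rightarrow> real ^ 'd) \<Rightarrow> real \<Rightarrow> ('a \<Rightarrow> real) \<Rightarrow> 'a \<Rightarrow> real" where
  "Sstar S T \<tau> \<omega> = (SUP u\<in>{\<tau> \<omega>..T}. maxnorm (S u \<omega> - S (\<tau> \<omega>) \<omega>))"

definition adapted_cont_pos_process ::
    "'a measure \<Rightarrow> (real \<Rightarrow> 'a measure) \<Rightarrow> real \<Rightarrow> (real \<Rightarrow> 'a \<Rightarrow> real ^ 'd) \<Rightarrow> bool" where
  "adapted_cont_pos_process M F T S \<longleftrightarrow>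
     (\<forall>t\<in>{0..T}. S t \<in> borel_measurable (F t)) \<and>
     (\<forall>\<omega>\<in>space M. continuous_on {0..T} (\<lambda>t. S t \<omega>)) \<and>
     (\<forall>\<omega>\<in>space M. \<forall>t\<in>{0..T}. \<forall>i. 0 < S t \<omega> $ i)"

definition sticky ::
    "'a measure \<Rightarrow> (real \<Rightarrow> 'a measure) \<Rightarrow> real \<Rightarrow> (real \<Rightarrow> 'a \<Rightarrow> real ^ 'd) \<Rightarrow> bool" where
  "sticky M F T S \<longleftrightarrow>
     (\<forall>t\<in>{0..<T}. \<forall>\<delta>>0.
        AE \<omega> in M. condP M (F t) {\<omega>'\<in>space M. Sstar S T (\<lambda>_. t) \<omega>' < \<delta>} \<omega> > 0)"

end

theory Submission
  imports Defs
begin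


lemma maxnorm_ge: "\<bar>x $ i\<bar> \<le> maxnorm x"
  unfolding maxnorm_def by (rule Max_ge) auto

lemma maxnorm_le_iff: "maxnorm x \<le> c \<longleftrightarrow> (\<forall>i. \<bar>x $ i\<bar> \<le> c)"
  unfolding maxnorm_def by (subst Max_le_iff) auto

lemma maxnorm_nonneg: "0 \<le> maxnorm x"
  using maxnorm_ge[of x undefined] by linarith

lemma maxnorm_zero[simp]: "maxnorm (x - x) = 0"
proof -
  have "maxnorm (x - x) \<le> 0" unfolding maxnorm_le_iff by simp
  moreover have "0 \<le> maxnorm (x - x)" by (rule maxnorm_nonneg)
  ultimately show ?thesis by linarith
qed

lemma maxnorm_0[simp]: "maxnorm (0::real^'d) = 0"
  using maxnorm_zero[of "0::real^'d"] by (simp del: maxnorm_zero)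

lemma maxnorm_triangle: "maxnorm (x + y) \<le> maxnorm x + maxnorm y"
  unfolding maxnorm_le_iff
proof
  fix i
  have "\<bar>(x+y) $ i\<bar> \<le> \<bar>x $ i\<bar> + \<bar>y $ i\<bar>" by simp
  then show "\<bar>(x+y) $ i\<bar> \<le> maxnorm x + maxnorm y" using maxnorm_ge[of x i] maxnorm_ge[of y i] by linarith
qed

lemma maxnorm_diff_tri: "maxnorm (x - z) \<le> maxnorm (x - y) + maxnorm (y - z)"
  using maxnorm_triangle[of "x - y" "y - z"] by simp

lemma maxnorm_commute: "maxnorm (x - y) = maxnorm (y - x)"
proof -
  have "\<And>x y. maxnorm (x - y) \<le> maxnorm (y - x)"
    unfolding maxnorm_le_iff using maxnorm_ge by (metis abs_minus_commute vector_minus_component)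
  then show ?thesis by (meson order_antisym)
qed

lemma maxnorm_le_norm: "maxnorm x \<le> norm x"
  unfolding maxnorm_le_iff by (simp add: component_le_norm_cart)

lemma maxnorm_lip: "\<bar>maxnorm x - maxnorm y\<bar> \<le> norm (x - y)"
proof -
  have "maxnorm x \<le> maxnorm (x - y) + maxnorm (y - 0)" using maxnorm_diff_tri[of x 0 y] by simp
  moreover have "maxnorm y \<le> maxnorm (y - x) + maxnorm (x - 0)" using maxnorm_diff_tri[of y 0 x] by simp
  ultimately show ?thesis using maxnorm_le_norm[of "x-y"] maxnorm_commute[of x y] by auto
qed

lemma continuous_on_maxnorm: "continuous_on A maxnorm"
  unfolding continuous_on_iff
proof (intro ballI allI impI)
  fix x e assume "x \<in> A" "(0::real) < e"
  show "\<exists>d>0. \<forall>x'\<in>A. dist x' x < d \<longrightarrow> dist (maxnorm x') (maxnorm x) < e"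
    using \<open>0 < e\<close> maxnorm_lip by (intro exI[of _ e]) (auto simp: dist_norm dist_real_def intro: le_less_trans)
qed

lemma borel_measurable_maxnorm[measurable]: "maxnorm \<in> borel_measurable borel"
  by (rule borel_measurable_continuous_onI) (rule continuous_on_maxnorm)

lemma bdd_cont:
  fixes g :: "real \<Rightarrow> real"
  assumes "continuous_on {a..b} g" "X \<subseteq> {a..b}"
  shows "bdd_above (g ` X)" "bdd_below (g ` X)"
proof -
  have "bounded (g ` {a..b})" using assms(1) compact_continuous_image compact_imp_bounded by blast
  then have "bounded (g ` X)" using assms(2) bounded_subset image_mono by metis
  then show "bdd_above (g ` X)" "bdd_below (g ` X)" by (auto intro: bounded_imp_bdd_above bounded_imp_bdd_below)
qed

lemma sup_rat:
  fixes g :: "real \<Rightarrow> real"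
  assumes ab: "a \<le> b" and cont: "continuous_on {a..b} g"
  shows "(SUP u\<in>{a..b}. g u) = (SUP q\<in>insert b \<rat>. if a \<le> q \<and> q \<le> b then g q else g a)"
proof (rule antisym)
  let ?h = "\<lambda>q. if a \<le> q \<and> q \<le> b then g q else g a"
  have himg: "?h ` insert b \<rat> \<subseteq> g ` {a..b}" using ab by auto
  have bdd: "bdd_above (g ` {a..b})" using bdd_cont[OF cont] by auto
  have bdd2: "bdd_above (?h ` insert b \<rat>)" by (rule bdd_above_mono[OF bdd himg])
  show "(SUP q\<in>insert b \<rat>. ?h q) \<le> (SUP u\<in>{a..b}. g u)"
    using himg bdd by (intro cSUP_least) (auto intro!: cSUP_upper)
  show "(SUP u\<in>{a..b}. g u) \<le> (SUP q\<in>insert b \<rat>. ?h q)"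
  proof (rule cSUP_least)
    show "{a..b} \<noteq> {}" using ab by auto
    fix u assume u: "u \<in> {a..b}"
    let ?R = "SUP q\<in>insert b \<rat>. ?h q"
    show "g u \<le> ?R"
    proof (cases "u = b")
      case True
      then show ?thesis using ab bdd2 by (intro cSUP_upper2[of _ _ b]) auto
    next
      case False
      then have ub: "u < b" using u by auto
      show ?thesis
      proof (rule field_le_epsilon)
        fix e :: real assume e: "0 < e"
        obtain d where d: "d > 0" "\<forall>x'\<in>{a..b}. dist x' u < d \<longrightarrow> dist (g x') (g u) < e"
          using cont u e unfolding continuous_on_iff by blast
        obtain q where q: "q \<in> \<rat>" "u < q" "q < min b (u + d)"
          using Rats_dense_in_real[of u "min b (u+d)"] ub d(1) by auto
        have qab: "q \<in> {a..b}" using q u by auto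
        have "dist q u < d" using q by (auto simp: dist_real_def)
        then have "g u < g q + e" using d(2) qab by (auto simp: dist_real_def)
        also have "g q = ?h q" using qab by auto
        also have "?h q \<le> ?R" using bdd2 q by (intro cSUP_upper) auto
        finally show "g u \<le> ?R + e" by simp
      qed
    qed
  qed
qed

lemma sup_meas:
  fixes g :: "real \<Rightarrow> 'a \<Rightarrow> real" and a :: "'a \<Rightarrow> real"
  assumes lob: "lo \<le> b"
   and le: "\<And>\<omega>. \<omega> \<in> space N \<Longrightarrow> lo \<le> a \<omega> \<and> a \<omega> \<le> b"
   and cont: "\<And>\<omega>. \<omega> \<in> space N \<Longrightarrow> continuous_on {a \<omega>..b} (\<lambda>u. g u \<omega>)"
   and gm: "\<And>q. q \<in> {lo..b} \<Longrightarrow> g q \<in> borel_measurable N"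
   and am[measurable]: "a \<in> borel_measurable N"
   and gam[measurable]: "(\<lambda>\<omega>. g (a \<omega>) \<omega>) \<in> borel_measurable N"
  shows "(\<lambda>\<omega>. SUP u\<in>{a \<omega>..b}. g u \<omega>) \<in> borel_measurable N"
proof -
  define h where "h q \<omega> = (if a \<omega> \<le> q \<and> q \<le> b then g (max lo (min b q)) \<omega> else g (a \<omega>) \<omega>)" for q \<omega>
  have eq: "(SUP u\<in>{a \<omega>..b}. g u \<omega>) = (SUP q\<in>insert b \<rat>. h q \<omega>)" if \<omega>: "\<omega> \<in> space N" for \<omega>
  proof -
    have "(SUP u\<in>{a \<omega>..b}. g u \<omega>) = (SUP q\<in>insert b \<rat>. if a \<omega> \<le> q \<and> q \<le> b then g q \<omega> else g (a \<omega>) \<omega>)"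
      using sup_rat[of "a \<omega>" b "\<lambda>u. g u \<omega>"] le[OF \<omega>] cont[OF \<omega>] by auto
    also have "\<dots> = (SUP q\<in>insert b \<rat>. h q \<omega>)"
      unfolding h_def using le[OF \<omega>] by (intro SUP_cong) auto
    finally show ?thesis .
  qed
  have hm: "h q \<in> borel_measurable N" for q
  proof -
    have [measurable]: "g (max lo (min b q)) \<in> borel_measurable N" using lob by (intro gm) auto
    show ?thesis unfolding h_def by measurable
  qed
  have bdd: "bdd_above ((\<lambda>q. h q \<omega>) ` insert b \<rat>)" if \<omega>: "\<omega> \<in> space N" for \<omega>
  proof -
    have s1: "(\<lambda>q. h q \<omega>) ` insert b \<rat> \<subseteq> (\<lambda>u. g u \<omega>) ` {a \<omega>..b}"
      unfolding h_def using le[OF \<omega>] by auto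
    have s2: "bdd_above ((\<lambda>u. g u \<omega>) ` {a \<omega>..b})" using bdd_cont(1)[OF cont[OF \<omega>]] by auto
    show ?thesis by (rule bdd_above_mono[OF s2 s1])
  qed
  have "(\<lambda>\<omega>. SUP q\<in>insert b \<rat>. h q \<omega>) \<in> borel_measurable N"
    by (rule borel_measurable_cSUP[OF _ hm bdd]) (simp_all add: countable_rat)
  then show ?thesis using eq by (subst measurable_cong) auto
qed



lemma ceil_grid:
  fixes x T :: real and n :: nat
  assumes T: "0 < T" and x: "0 \<le> x"
  defines "h \<equiv> T / real (Suc n)"
  shows "x \<le> real (nat \<lceil>x / h\<rceil>) * h" "real (nat \<lceil>x / h\<rceil>) * h < x + h"
proof -
  have h: "0 < h" unfolding h_def using T by auto
  let ?y = "x / h"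
  have y0: "0 \<le> ?y" using x h by auto
  have c1: "?y \<le> real (nat \<lceil>?y\<rceil>)" using y0 by linarith
  have c2: "real (nat \<lceil>?y\<rceil>) < ?y + 1" using y0 by linarith
  have yh: "?y * h = x" using h by simp
  show "x \<le> real (nat \<lceil>x / h\<rceil>) * h" using mult_right_mono[OF c1, of h] h yh by simp
  show "real (nat \<lceil>x / h\<rceil>) * h < x + h" using mult_strict_right_mono[OF c2 h] yh by (simp add: algebra_simps)
qed

lemma stopped_meas:
  fixes S :: "real \<Rightarrow> 'a \<Rightarrow> real^'d"
  assumes T: "0 < T"
  and Sm: "\<And>t. t\<in>{0..T} \<Longrightarrow> S t \<in> borel_measurable M"
  and cont: "\<And>\<omega>. \<omega>\<in>space M \<Longrightarrow> continuous_on {0..T} (\<lambda>t. S t \<omega>)"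
  and \<tau>m[measurable]: "\<tau> \<in> borel_measurable M" and \<tau>r: "\<And>\<omega>. \<omega>\<in>space M \<Longrightarrow> \<tau> \<omega> \<in> {0..T}"
  shows "(\<lambda>\<omega>. S (\<tau> \<omega>) \<omega>) \<in> borel_measurable M"
proof (rule borel_measurable_LIMSEQ_metric)
  define h where "h n = T / real (Suc n)" for n
  define f where "f n \<omega> = S (min T (real (nat \<lceil>\<tau> \<omega> / h n\<rceil>) * h n)) \<omega>" for n \<omega>
  show "(\<lambda>\<omega>. f n \<omega>) \<in> borel_measurable M" for n
  proof -
    have g: "(\<lambda>\<omega>. nat \<lceil>\<tau> \<omega> / h n\<rceil>) \<in> M \<rightarrow>\<^sub>M count_space UNIV" by measurable
    have "(\<lambda>\<omega>. (\<lambda>i \<omega>. S (min T (real i * h n)) \<omega>) (nat \<lceil>\<tau> \<omega> / h n\<rceil>) \<omega>) \<in> borel_measurable M"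
    proof (rule measurable_compose_countable[OF _ g])
      fix i :: nat
      have "min T (real i * h n) \<in> {0..T}" using T by (auto simp: h_def)
      then show "S (min T (real i * h n)) \<in> borel_measurable M" by (rule Sm)
    qed
    then show ?thesis unfolding f_def by simp
  qed
  fix \<omega> assume \<omega>: "\<omega> \<in> space M"
  have x: "\<tau> \<omega> \<in> {0..T}" using \<tau>r[OF \<omega>] .
  have lo: "\<tau> \<omega> \<le> min T (real (nat \<lceil>\<tau> \<omega> / h n\<rceil>) * h n)" for n
    using ceil_grid(1)[OF T, of "\<tau> \<omega>" n] x by (auto simp: h_def)
  have hi: "min T (real (nat \<lceil>\<tau> \<omega> / h n\<rceil>) * h n) \<le> \<tau> \<omega> + h n" for n
    using ceil_grid(2)[OF T, of "\<tau> \<omega>" n] x by (auto simp: h_def)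
  have hlim: "(\<lambda>n. \<tau> \<omega> + h n) \<longlonglongrightarrow> \<tau> \<omega> + 0"
  proof -
    have "(\<lambda>n. T * inverse (real (Suc n))) \<longlonglongrightarrow> T * 0"
      by (intro tendsto_mult tendsto_const LIMSEQ_inverse_real_of_nat)
    then have "h \<longlonglongrightarrow> 0" unfolding h_def by (simp add: divide_inverse)
    then show ?thesis by (intro tendsto_add tendsto_const)
  qed
  have lim: "(\<lambda>n. min T (real (nat \<lceil>\<tau> \<omega> / h n\<rceil>) * h n)) \<longlonglongrightarrow> \<tau> \<omega>"
    by (rule tendsto_sandwich[of "\<lambda>_. \<tau> \<omega>" _ _ "\<lambda>n. \<tau> \<omega> + h n"]) (use lo hi hlim in auto)
  have inr: "min T (real (nat \<lceil>\<tau> \<omega> / h n\<rceil>) * h n) \<in> {0..T}" for n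
    using lo[of n] x by auto
  show "(\<lambda>n. f n \<omega>) \<longlonglongrightarrow> S (\<tau> \<omega>) \<omega>"
    unfolding f_def
    by (rule continuous_on_tendsto_compose[OF cont[OF \<omega>] lim x]) (use inr in \<open>simp only: always_eventually, simp\<close>)
qed

lemma cont_mn:
  fixes S :: "real \<Rightarrow> 'a \<Rightarrow> real^'d"
  assumes "continuous_on A (\<lambda>u. S u \<omega>)"
  shows "continuous_on A (\<lambda>u. maxnorm (S u \<omega> - c))"
proof -
  have "continuous_on A (\<lambda>u. S u \<omega> - c)" by (intro continuous_on_diff assms continuous_on_const)
  then show ?thesis using continuous_on_compose2[OF continuous_on_maxnorm[of UNIV]] by blast
qed

lemma Sstar_meas:
  fixes S :: "real \<Rightarrow> 'a \<Rightarrow> real^'d"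
  assumes T: "0 < T"
  and Sm: "\<And>t. t\<in>{0..T} \<Longrightarrow> S t \<in> borel_measurable M"
  and cont: "\<And>\<omega>. \<omega>\<in>space M \<Longrightarrow> continuous_on {0..T} (\<lambda>t. S t \<omega>)"
  and \<tau>m[measurable]: "\<tau> \<in> borel_measurable M" and \<tau>r: "\<And>\<omega>. \<omega>\<in>space M \<Longrightarrow> \<tau> \<omega> \<in> {0..T}"
  shows "Sstar S T \<tau> \<in> borel_measurable M"
proof -
  have [measurable]: "(\<lambda>\<omega>. S (\<tau> \<omega>) \<omega>) \<in> borel_measurable M"
    by (rule stopped_meas[OF T Sm cont \<tau>m \<tau>r])
  have "(\<lambda>\<omega>. SUP u\<in>{\<tau> \<omega>..T}. maxnorm (S u \<omega> - S (\<tau> \<omega>) \<omega>)) \<in> borel_measurable M"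
  proof (rule sup_meas[where lo=0])
    show "0 \<le> T" using T by simp
    fix \<omega> assume \<omega>: "\<omega> \<in> space M"
    show "0 \<le> \<tau> \<omega> \<and> \<tau> \<omega> \<le> T" using \<tau>r[OF \<omega>] by auto
    show "continuous_on {\<tau> \<omega>..T} (\<lambda>u. maxnorm (S u \<omega> - S (\<tau> \<omega>) \<omega>))"
      using \<tau>r[OF \<omega>] by (intro cont_mn continuous_on_subset[OF cont[OF \<omega>]]) auto
  next
    fix q :: real assume "q \<in> {0..T}"
    then have [measurable]: "S q \<in> borel_measurable M" by (rule Sm)
    show "(\<lambda>\<omega>. maxnorm (S q \<omega> - S (\<tau> \<omega>) \<omega>)) \<in> borel_measurable M" by measurable
  qed (auto)
  then show ?thesis unfolding Sstar_def .
qed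



theorem lemma1:
  fixes M :: "'a measure" and F :: "real \<Rightarrow> 'a measure" and T :: real
    and S :: "real \<Rightarrow> 'a \<Rightarrow> real ^ 'd"
    and \<tau> :: "'a \<Rightarrow> real" and \<eta> :: "'a \<Rightarrow> real"
  assumes "filtered_prob_space_usual M F T"
    and "adapted_cont_pos_process M F T S"
    and "sticky M F T S"
    and "stopping_time_on M F T \<tau>"
    and "\<eta> \<in> borel_measurable (stopped_sigma M F T \<tau>)"
    and "\<forall>\<omega>\<in>space M. 0 \<le> \<eta> \<omega>"
  shows "AE \<omega> in M. 0 < \<eta> \<omega> \<longrightarrow>
           0 < condP M (stopped_sigma M F T \<tau>)
                 {\<omega>'\<in>space M. Sstar S T \<tau> \<omega>' < \<eta> \<omega>'} \<omega>"
proof -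
  have P: "prob_space M" and T0: "0 < T"
    and sub: "\<And>t. t\<in>{0..T} \<Longrightarrow> subalgebra M (F t)"
    and mono: "\<And>s t. s\<in>{0..T} \<Longrightarrow> t\<in>{0..T} \<Longrightarrow> s \<le> t \<Longrightarrow> sets (F s) \<subseteq> sets (F t)"
    using assms(1) unfolding filtered_prob_space_usual_def by auto
  interpret prob_space M by (rule P)
  have Sm: "\<And>t. t\<in>{0..T} \<Longrightarrow> S t \<in> borel_measurable (F t)"
    and Scont: "\<And>\<omega>. \<omega>\<in>space M \<Longrightarrow> continuous_on {0..T} (\<lambda>t. S t \<omega>)"
    using assms(2) unfolding adapted_cont_pos_process_def by auto
  have SmM: "\<And>t. t\<in>{0..T} \<Longrightarrow> S t \<in> borel_measurable M"
    using Sm sub measurable_from_subalg by blast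
  have Smt: "S q \<in> borel_measurable (F t)" if "q \<in> {0..T}" "t \<in> {0..T}" "q \<le> t" for q t
  proof (rule measurable_from_subalg[OF _ Sm[OF that(1)]])
    show "subalgebra (F t) (F q)" using sub[OF that(1)] sub[OF that(2)] mono[OF that]
      unfolding subalgebra_def by auto
  qed
  have \<tau>r: "\<And>\<omega>. \<omega>\<in>space M \<Longrightarrow> \<tau> \<omega> \<in> {0..T}"
    and \<tau>F: "\<And>t. t\<in>{0..T} \<Longrightarrow> {\<omega>\<in>space M. \<tau> \<omega> \<le> t} \<in> sets (F t)"
    using assms(4) unfolding stopping_time_on_def by auto
  have spF: "\<And>t. t\<in>{0..T} \<Longrightarrow> space (F t) = space M" using sub unfolding subalgebra_def by auto
  have \<tau>le: "{\<omega>\<in>space M. \<tau> \<omega> \<le> s} \<in> sets (F t)" if "t\<in>{0..T}" "s \<le> t" for s t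
  proof (cases "s < 0")
    case True
    have eq: "{\<omega>\<in>space M. \<tau> \<omega> \<le> s} = {}" using \<tau>r True by force
    show ?thesis by (subst eq) simp
  next
    case False
    then have s: "s \<in> {0..T}" using that by auto
    show ?thesis using \<tau>F[OF s] mono[OF s that(1) that(2)] by auto
  qed
  have \<tau>m[measurable]: "\<tau> \<in> borel_measurable M"
    unfolding borel_measurable_iff_le
  proof
    fix a
    show "{w \<in> space M. \<tau> w \<le> a} \<in> sets M"
    proof (cases "a < T")
      case True
      have T: "T \<in> {0..T}" using T0 by auto
      have "{w \<in> space M. \<tau> w \<le> a} \<in> sets (F T)" using \<tau>le[OF T] True by auto
      then show ?thesis using sub[OF T] unfolding subalgebra_def by auto
    next
      case False
      have eq: "{w \<in> space M. \<tau> w \<le> a} = space M" using \<tau>r False by force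
      show ?thesis by (subst eq) simp
    qed
  qed
  define C where "C = {A\<in>sets M. \<forall>t\<in>{0..T}. {\<omega>\<in>A. \<tau> \<omega> \<le> t} \<in> sets (F t)}"
  define G where "G = stopped_sigma M F T \<tau>"
  have CPow: "C \<subseteq> Pow (space M)" unfolding C_def using sets.sets_into_space by auto
  have saC: "sigma_algebra (space M) C"
    unfolding sigma_algebra_iff2
  proof (intro conjI ballI allI impI)
    show "C \<subseteq> Pow (space M)" by (rule CPow)
    show "{} \<in> C" unfolding C_def by auto
  next
    fix s assume s: "s \<in> C"
    show "space M - s \<in> C" unfolding C_def
    proof (intro CollectI conjI ballI)
      show "space M - s \<in> sets M" using s unfolding C_def by auto
      fix t :: real assume t: "t \<in> {0..T}"
      have "{\<omega> \<in> space M - s. \<tau> \<omega> \<le> t} = {\<omega>\<in>space M. \<tau> \<omega> \<le> t} - {\<omega> \<in> s. \<tau> \<omega> \<le> t}" by auto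
      also have "\<dots> \<in> sets (F t)" using \<tau>F[OF t] s t unfolding C_def by auto
      finally show "{\<omega> \<in> space M - s. \<tau> \<omega> \<le> t} \<in> sets (F t)" .
    qed
  next
    fix A :: "nat \<Rightarrow> 'a set" assume A: "range A \<subseteq> C"
    show "(\<Union>i. A i) \<in> C" unfolding C_def
    proof (intro CollectI conjI ballI)
      show "(\<Union>i. A i) \<in> sets M" using A unfolding C_def by auto
      fix t :: real assume t: "t \<in> {0..T}"
      have "{\<omega> \<in> (\<Union>i. A i). \<tau> \<omega> \<le> t} = (\<Union>i. {\<omega> \<in> A i. \<tau> \<omega> \<le> t})" by auto
      also have "\<dots> \<in> sets (F t)" using A t unfolding C_def by (intro sets.countable_UN) auto
      finally show "{\<omega> \<in> (\<Union>i. A i). \<tau> \<omega> \<le> t} \<in> sets (F t)" .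
    qed
  qed
  have setsG: "sets G = C" and spG: "space G = space M"
  proof -
    have "G = sigma (space M) C" unfolding G_def stopped_sigma_def C_def by simp
    then show "sets G = C" "space G = space M"
      using sets_measure_of[OF CPow] space_measure_of[OF CPow] sigma_algebra.sigma_sets_eq[OF saC] by auto
  qed
  have subG: "subalgebra M G" unfolding subalgebra_def using setsG spG C_def by auto
  interpret G: sigma_finite_subalgebra M G
    by (rule finite_measure_subalgebra_is_sigma_finite)
      (simp add: finite_measure_subalgebra_def finite_measure_subalgebra_axioms_def finite_measure_axioms subG)
  have \<eta>G[measurable]: "\<eta> \<in> borel_measurable G" using assms(5) unfolding G_def .
  have \<eta>M[measurable]: "\<eta> \<in> borel_measurable M" by (rule measurable_from_subalg[OF subG \<eta>G])
  have SstarM[measurable]: "Sstar S T \<tau> \<in> borel_measurable M"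
    by (rule Sstar_meas[OF T0 SmM Scont \<tau>m \<tau>r])
  define E where "E = {\<omega>'\<in>space M. Sstar S T \<tau> \<omega>' < \<eta> \<omega>'}"
  have EM: "E \<in> sets M" unfolding E_def by measurable
  have claim: "A \<inter> E \<notin> null_sets M"
    if A: "A \<in> sets G" "\<And>\<omega>. \<omega> \<in> A \<Longrightarrow> 0 < \<eta> \<omega>" "A \<notin> null_sets M" for A
  proof (rule ccontr)
    assume "\<not> A \<inter> E \<notin> null_sets M"
    then have AEnull: "A \<inter> E \<in> null_sets M" by simp
    have AM: "A \<in> sets M" and AF: "\<And>t. t\<in>{0..T} \<Longrightarrow> {\<omega>\<in>A. \<tau> \<omega> \<le> t} \<in> sets (F t)"
      using A(1) unfolding setsG C_def by auto
    have Asp: "A \<subseteq> space M" using AM sets.sets_into_space by auto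
    define h where "h n = T / real (Suc n)" for n :: nat
    define tk where "tk n k = real k * h n" for n k :: nat
    define W where "W n k \<omega> = (SUP u\<in>{max 0 (tk n k - h n)..tk n k}. maxnorm (S u \<omega> - S (tk n k) \<omega>))" for n k \<omega>
    define AS where "AS = (\<lambda>(m::nat,n::nat,k::nat). if k \<le> Suc n then {\<omega>\<in>A. 2 / real (Suc m) < \<eta> \<omega> \<and> tk n k - h n < \<tau> \<omega> \<and> \<tau> \<omega> \<le> tk n k \<and> W n k \<omega> < 1 / (4 * real (Suc m))} else {})"
    have hpos: "0 < h n" for n unfolding h_def using T0 by simp
    have tkT: "tk n k \<in> {0..T}" if "k \<le> Suc n" for n k
    proof -
      have "real k * h n \<le> real (Suc n) * h n" using that hpos[of n] by (intro mult_right_mono) auto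
      also have "\<dots> = T" unfolding h_def by simp
      finally show ?thesis unfolding tk_def using hpos[of n] by auto
    qed
    have cover: "A \<subseteq> (\<Union>i. AS i)"
    proof
      fix \<omega> assume \<omega>A: "\<omega> \<in> A"
      then have \<omega>: "\<omega> \<in> space M" using Asp by auto
      have \<eta>p: "0 < \<eta> \<omega>" using A(2)[OF \<omega>A] .
      obtain m :: nat where m: "2 / \<eta> \<omega> < real m" using reals_Archimedean2 by blast
      have "2 < \<eta> \<omega> * real m" using m \<eta>p by (simp add: divide_less_eq mult.commute)
      then have "2 < \<eta> \<omega> * real (Suc m)" using \<eta>p by (simp add: algebra_simps)
      then have m2: "2 / real (Suc m) < \<eta> \<omega>" by (simp add: divide_less_eq mult.commute)
      define \<delta> where "\<delta> = 1 / real (Suc m)"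
      have \<delta>p: "0 < \<delta>" unfolding \<delta>_def by simp
      have "uniformly_continuous_on {0..T} (\<lambda>t. S t \<omega>)"
        by (rule compact_uniformly_continuous[OF Scont[OF \<omega>] compact_Icc])
      then obtain d where d: "0 < d" "\<forall>x\<in>{0..T}. \<forall>x'\<in>{0..T}. dist x' x < d \<longrightarrow> dist (S x' \<omega>) (S x \<omega>) < \<delta> / 8"
        unfolding uniformly_continuous_on_def using \<delta>p by (metis zero_less_divide_iff zero_less_numeral)
      obtain n :: nat where n: "T / d < real n" using reals_Archimedean2 by blast
      have "T < d * real n" using n d(1) by (simp add: divide_less_eq mult.commute)
      then have "T < d * real (Suc n)" using d(1) by (simp add: algebra_simps)
      then have hd: "h n < d" unfolding h_def by (simp add: divide_less_eq mult.commute)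
      define k where "k = nat \<lceil>\<tau> \<omega> / h n\<rceil>"
      have x: "\<tau> \<omega> \<in> {0..T}" using \<tau>r[OF \<omega>] .
      have g1: "\<tau> \<omega> \<le> tk n k" and g2: "tk n k < \<tau> \<omega> + h n"
        using ceil_grid[OF T0, of "\<tau> \<omega>" n] x unfolding tk_def k_def h_def by auto
      have kn: "k \<le> Suc n"
      proof -
        have "\<tau> \<omega> / h n \<le> real (Suc n)" using x hpos[of n] unfolding h_def by (simp add: divide_le_eq)
        then have "\<lceil>\<tau> \<omega> / h n\<rceil> \<le> int (Suc n)" by (simp add: ceiling_le_iff)
        then show ?thesis unfolding k_def by linarith
      qed
      have tkr: "tk n k \<in> {0..T}" by (rule tkT[OF kn])
      have Wle: "W n k \<omega> \<le> \<delta> / 8"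
        unfolding W_def
      proof (rule cSUP_least)
        show "{max 0 (tk n k - h n)..tk n k} \<noteq> {}" using tkr hpos[of n] by auto
        fix u assume u: "u \<in> {max 0 (tk n k - h n)..tk n k}"
        then have ur: "u \<in> {0..T}" using tkr by auto
        have "dist u (tk n k) < d" using u hd hpos[of n] by (auto simp: dist_real_def)
        then have "dist (S u \<omega>) (S (tk n k) \<omega>) < \<delta> / 8" using d(2) ur tkr by blast
        then show "maxnorm (S u \<omega> - S (tk n k) \<omega>) \<le> \<delta> / 8"
          using maxnorm_le_norm[of "S u \<omega> - S (tk n k) \<omega>"] by (simp add: dist_norm)
      qed
      have e1: "\<delta> / 8 < \<delta> / 4" using \<delta>p by simp
      have e2: "\<delta> / 4 = 1 / (4 * real (Suc m))" unfolding \<delta>_def by simp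
      have "W n k \<omega> < 1 / (4 * real (Suc m))" using Wle e1 e2 by linarith
      then have "\<omega> \<in> AS (m, n, k)" unfolding AS_def using kn \<omega>A m2 g1 g2 by auto
      then show "\<omega> \<in> (\<Union>i. AS i)" by blast
    qed
    have "\<exists>i. AS i \<notin> null_sets M"
    proof (rule ccontr)
      assume "\<not> (\<exists>i. AS i \<notin> null_sets M)"
      then have "(\<Union>i\<in>UNIV. AS i) \<in> null_sets M" by (intro null_sets_UN') auto
      then have "A \<in> null_sets M" using null_sets_subset[OF _ AM cover] by simp
      then show False using A(3) by simp
    qed
    then obtain m n k where ASn: "AS (m,n,k) \<notin> null_sets M" by auto
    have kn: "k \<le> Suc n"
    proof (rule ccontr)
      assume "\<not> k \<le> Suc n"
      then have "AS (m,n,k) = {}" unfolding AS_def by auto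
      then show False using ASn by simp
    qed
    define \<delta> where "\<delta> = 1 / real (Suc m)"
    have \<delta>p: "0 < \<delta>" unfolding \<delta>_def by simp
    define t where "t = tk n k"
    define a0 where "a0 = max 0 (t - h n)"
    have tr: "t \<in> {0..T}" unfolding t_def by (rule tkT[OF kn])
    have a0r: "a0 \<in> {0..T}" "a0 \<le> t" using tr hpos[of n] unfolding a0_def by auto
    have ASeq: "AS (m,n,k) = {\<omega>\<in>A. 2 * \<delta> < \<eta> \<omega> \<and> t - h n < \<tau> \<omega> \<and> \<tau> \<omega> \<le> t \<and> W n k \<omega> < \<delta> / 4}"
    proof -
      have e2: "\<delta> / 4 = 1 / (4 * real (Suc m))" "2 * \<delta> = 2 / real (Suc m)" unfolding \<delta>_def by simp_all
      show ?thesis unfolding AS_def t_def e2 using kn by auto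
    qed
    have Wm[measurable]: "W n k \<in> borel_measurable (F t)"
    proof -
      have "(\<lambda>\<omega>. SUP u\<in>{(\<lambda>_. a0) \<omega>..t}. maxnorm (S u \<omega> - S t \<omega>)) \<in> borel_measurable (F t)"
      proof (rule sup_meas[where lo=a0])
        show "a0 \<le> t" by (rule a0r(2))
        fix \<omega> assume "\<omega> \<in> space (F t)"
        then have \<omega>: "\<omega> \<in> space M" using spF[OF tr] by simp
        show "continuous_on {a0..t} (\<lambda>u. maxnorm (S u \<omega> - S t \<omega>))"
          using a0r tr by (intro cont_mn continuous_on_subset[OF Scont[OF \<omega>]]) auto
      next
        have [measurable]: "S t \<in> borel_measurable (F t)" using Sm[OF tr] .
        fix q assume "q \<in> {a0..t}"
        then have [measurable]: "S q \<in> borel_measurable (F t)" using a0r tr by (intro Smt) auto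
        show "(\<lambda>\<omega>. maxnorm (S q \<omega> - S t \<omega>)) \<in> borel_measurable (F t)" by measurable
      next
        have [measurable]: "S t \<in> borel_measurable (F t)" using Sm[OF tr] .
        have [measurable]: "S a0 \<in> borel_measurable (F t)" using a0r tr by (intro Smt) auto
        show "(\<lambda>\<omega>. maxnorm (S ((\<lambda>_. a0) \<omega>) \<omega> - S t \<omega>)) \<in> borel_measurable (F t)" by measurable
      qed (auto simp: a0r)
      then show ?thesis unfolding W_def a0_def t_def by simp
    qed
    define A2 where "A2 = {\<omega>\<in>A. 2 * \<delta> < \<eta> \<omega>}"
    have A2G: "A2 \<in> sets G"
    proof -
      have "{\<omega>\<in>space G. 2 * \<delta> < \<eta> \<omega>} \<in> sets G" by measurable
      then have "A \<inter> {\<omega>\<in>space G. 2 * \<delta> < \<eta> \<omega>} \<in> sets G" using A(1) by auto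
      moreover have "A \<inter> {\<omega>\<in>space G. 2 * \<delta> < \<eta> \<omega>} = A2" unfolding A2_def spG using Asp by auto
      ultimately show ?thesis by simp
    qed
    have ASF: "AS (m,n,k) \<in> sets (F t)"
    proof -
      have s1: "{\<omega>\<in>A2. \<tau> \<omega> \<le> t} \<in> sets (F t)" using A2G tr unfolding setsG C_def by auto
      have s2: "{\<omega>\<in>space M. \<tau> \<omega> \<le> t - h n} \<in> sets (F t)" using \<tau>le[OF tr, of "t - h n"] hpos[of n] by simp
      have s3: "{\<omega>\<in>space (F t). W n k \<omega> < \<delta> / 4} \<in> sets (F t)" by measurable
      have "AS (m,n,k) = ({\<omega>\<in>A2. \<tau> \<omega> \<le> t} - {\<omega>\<in>space M. \<tau> \<omega> \<le> t - h n}) \<inter> {\<omega>\<in>space (F t). W n k \<omega> < \<delta> / 4}"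
        unfolding ASeq A2_def spF[OF tr] using Asp by auto
      also have "\<dots> \<in> sets (F t)" using s1 s2 s3 by auto
      finally show ?thesis .
    qed
    have ASM: "AS (m,n,k) \<in> sets M" using ASF sub[OF tr] unfolding subalgebra_def by auto
    have ASsp: "AS (m,n,k) \<subseteq> space M" using ASM sets.sets_into_space by auto
    define Et where "Et = {\<omega>'\<in>space M. Sstar S T (\<lambda>_. t) \<omega>' < \<delta>}"
    have EtM: "Et \<in> sets M"
    proof -
      have [measurable]: "Sstar S T (\<lambda>_. t) \<in> borel_measurable M"
        by (rule Sstar_meas[OF T0 SmM Scont]) (use tr in auto)
      show ?thesis unfolding Et_def by measurable
    qed
    have ASEt: "AS (m,n,k) \<inter> Et \<notin> null_sets M"
    proof (cases "t < T")
      case True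
      have stk: "AE \<omega> in M. 0 < condP M (F t) Et \<omega>"
        using assms(3) True tr \<delta>p unfolding sticky_def Et_def by auto
      interpret Ft: sigma_finite_subalgebra M "F t"
        by (rule finite_measure_subalgebra_is_sigma_finite)
          (simp add: finite_measure_subalgebra_def finite_measure_subalgebra_axioms_def finite_measure_axioms sub[OF tr])
      have intEt: "integrable M (indicator Et :: 'a \<Rightarrow> real)"
        using EtM by (auto intro: integrable_real_indicator simp: less_top[symmetric])
      have eq2: "(\<integral>x\<in>AS (m,n,k). indicator Et x \<partial>M) = (\<integral>x\<in>AS (m,n,k). condP M (F t) Et x \<partial>M)"
        unfolding condP_def by (rule Ft.real_cond_exp_intA[OF intEt ASF])
      show ?thesis
      proof
        assume nul: "AS (m,n,k) \<inter> Et \<in> null_sets M"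
        have "(\<integral>x\<in>AS (m,n,k). indicator Et x \<partial>M) = (\<integral>x. indicator (AS (m,n,k) \<inter> Et) x \<partial>M)"
          unfolding set_lebesgue_integral_def by (intro Bochner_Integration.integral_cong) (auto simp: indicator_def)
        also have "\<dots> = measure M (AS (m,n,k) \<inter> Et)" using ASM EtM by (simp add: Int_absorb2 sets.sets_into_space)
        also have "\<dots> = 0" using nul by (rule measure_eq_0_null_sets)
        finally have z: "(\<integral>x. indicator (AS (m,n,k)) x * condP M (F t) Et x \<partial>M) = 0"
          using eq2 unfolding set_lebesgue_integral_def by simp
        have cint0: "integrable M (condP M (F t) Et)" unfolding condP_def by (rule Ft.real_cond_exp_int(1)[OF intEt])
        have cint: "integrable M (\<lambda>x. indicator (AS (m,n,k)) x * condP M (F t) Et x)"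
          using integrable_mult_indicator[OF ASM cint0] by simp
        have nn: "AE x in M. 0 \<le> indicator (AS (m,n,k)) x * condP M (F t) Et x"
          using stk by eventually_elim (auto simp: indicator_def)
        have "AE x in M. indicator (AS (m,n,k)) x * condP M (F t) Et x = 0"
          using integral_nonneg_eq_0_iff_AE[OF cint nn] z by simp
        then have "AE x in M. x \<notin> AS (m,n,k)" using stk by eventually_elim (auto simp: indicator_def)
        then have "AS (m,n,k) \<in> null_sets M" using AE_iff_null_sets[OF ASM] by simp
        then show False using ASn by simp
      qed
    next
      case False
      then have tT: "t = T" using tr by auto
      have "Et = space M"
        unfolding Et_def Sstar_def tT using \<delta>p by auto
      then show ?thesis using ASn ASsp by (simp add: Int_absorb2)
    qed

    have incl: "AS (m,n,k) \<inter> Et \<subseteq> A \<inter> E"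
    proof
      fix \<omega> assume \<omega>: "\<omega> \<in> AS (m,n,k) \<inter> Et"
      then have \<omega>A: "\<omega> \<in> A" and \<eta>2: "2 * \<delta> < \<eta> \<omega>" and lt: "t - h n < \<tau> \<omega>" and le: "\<tau> \<omega> \<le> t"
        and Wl: "W n k \<omega> < \<delta> / 4" and Sl: "Sstar S T (\<lambda>_. t) \<omega> < \<delta>"
        unfolding ASeq Et_def by auto
      have \<omega>M: "\<omega> \<in> space M" using \<omega>A Asp by auto
      let ?g = "\<lambda>u. maxnorm (S u \<omega> - S t \<omega>)"
      have gc: "continuous_on {0..T} ?g" by (rule cont_mn[where S=S, OF Scont[OF \<omega>M]])
      have x: "\<tau> \<omega> \<in> {0..T}" using \<tau>r[OF \<omega>M] .
      have xa: "a0 \<le> \<tau> \<omega>" unfolding a0_def using x lt by auto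
      have Weq: "W n k \<omega> = (SUP u\<in>{a0..t}. ?g u)" unfolding W_def a0_def t_def by simp
      have Wge: "?g u \<le> W n k \<omega>" if "u \<in> {a0..t}" for u
        unfolding Weq
        by (rule cSUP_upper[OF that bdd_cont(1)[OF gc]]) (use a0r tr in auto)
      have Sst: "Sstar S T (\<lambda>_. t) \<omega> = (SUP u\<in>{t..T}. ?g u)" unfolding Sstar_def by simp
      have Sge: "?g u \<le> Sstar S T (\<lambda>_. t) \<omega>" if "u \<in> {t..T}" for u
        unfolding Sst
        by (rule cSUP_upper[OF that bdd_cont(1)[OF gc]]) (use tr in auto)
      have S0: "0 \<le> Sstar S T (\<lambda>_. t) \<omega>" using Sge[of t] tr by simp
      have W0: "0 \<le> W n k \<omega>" using Wge[of t] a0r by simp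
      have eq\<tau>: "Sstar S T \<tau> \<omega> = (SUP u\<in>{\<tau> \<omega>..T}. maxnorm (S u \<omega> - S (\<tau> \<omega>) \<omega>))" unfolding Sstar_def by simp
      have main: "Sstar S T \<tau> \<omega> \<le> 2 * W n k \<omega> + Sstar S T (\<lambda>_. t) \<omega>"
        unfolding eq\<tau>
      proof (rule cSUP_least)
        show "{\<tau> \<omega>..T} \<noteq> {}" using x by auto
        fix u assume u: "u \<in> {\<tau> \<omega>..T}"
        have a: "maxnorm (S u \<omega> - S (\<tau> \<omega>) \<omega>) \<le> ?g u + maxnorm (S t \<omega> - S (\<tau> \<omega>) \<omega>)" by (rule maxnorm_diff_tri)
        have b: "maxnorm (S t \<omega> - S (\<tau> \<omega>) \<omega>) \<le> W n k \<omega>"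
          using Wge[of "\<tau> \<omega>"] xa le maxnorm_commute[of "S t \<omega>" "S (\<tau> \<omega>) \<omega>"] by simp
        have c: "?g u \<le> W n k \<omega> + Sstar S T (\<lambda>_. t) \<omega>"
        proof (cases "u \<le> t")
          case True
          then show ?thesis using Wge[of u] u xa S0 by simp
        next
          case False
          then show ?thesis using Sge[of u] u W0 by simp
        qed
        show "maxnorm (S u \<omega> - S (\<tau> \<omega>) \<omega>) \<le> 2 * W n k \<omega> + Sstar S T (\<lambda>_. t) \<omega>"
          using a b c by linarith
      qed
      then have "Sstar S T \<tau> \<omega> < \<eta> \<omega>" using Wl Sl \<eta>2 \<delta>p by linarith
      then show "\<omega> \<in> A \<inter> E" unfolding E_def using \<omega>A \<omega>M by auto
    qed

    have "AS (m,n,k) \<inter> Et \<in> null_sets M"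
      using null_sets_subset[OF AEnull _ incl] ASM EtM by auto
    then show False using ASEt by simp
  qed
  define B where "B = {\<omega>\<in>space M. 0 < \<eta> \<omega> \<and> condP M G E \<omega> \<le> 0}"
  have BG: "B \<in> sets G"
  proof -
    have [measurable]: "condP M G E \<in> borel_measurable G" unfolding condP_def by measurable
    have "{\<omega>\<in>space G. 0 < \<eta> \<omega> \<and> condP M G E \<omega> \<le> 0} \<in> sets G" by measurable
    then show ?thesis unfolding B_def spG .
  qed
  have BM: "B \<in> sets M" using BG subG unfolding subalgebra_def by auto
  have intE: "integrable M (indicator E :: 'a \<Rightarrow> real)" using EM by (auto intro: integrable_real_indicator simp: less_top[symmetric])
  have ce_int: "integrable M (condP M G E)" unfolding condP_def using G.real_cond_exp_int(1)[OF intE] .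
  have eq: "(\<integral>x\<in>B. indicator E x \<partial>M) = (\<integral>x\<in>B. condP M G E x \<partial>M)"
    unfolding condP_def by (rule G.real_cond_exp_intA[OF intE BG])
  have i1: "(\<integral>x\<in>B. indicator E x \<partial>M) = measure M (B \<inter> E)"
  proof -
    have "(\<integral>x\<in>B. indicator E x \<partial>M) = (\<integral>x. indicator (B \<inter> E) x \<partial>M)"
      unfolding set_lebesgue_integral_def by (intro Bochner_Integration.integral_cong) (auto simp: indicator_def)
    also have "\<dots> = measure M (B \<inter> E)" using BM EM by (simp add: Int_absorb2 sets.sets_into_space)
    finally show ?thesis .
  qed
  have i2: "(\<integral>x\<in>B. condP M G E x \<partial>M) \<le> 0"
  proof -
    have "(\<integral>x\<in>B. condP M G E x \<partial>M) = (\<integral>x. indicator B x * condP M G E x \<partial>M)"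
      unfolding set_lebesgue_integral_def by simp
    also have "\<dots> \<le> (\<integral>x. 0 \<partial>M)"
      by (rule integral_mono') (auto simp: B_def indicator_def)
    finally show ?thesis by simp
  qed
  have BEnull: "B \<inter> E \<in> null_sets M"
  proof -
    have "measure M (B \<inter> E) = 0" using i1 i2 eq measure_nonneg[of M "B \<inter> E"] by linarith
    then show ?thesis using BM EM by (simp add: null_sets_def emeasure_eq_measure)
  qed
  have Bnull: "B \<in> null_sets M"
    using claim[OF BG _ ] BEnull unfolding B_def by auto
  show ?thesis unfolding G_def[symmetric] E_def[symmetric]
    by (rule AE_I'[OF Bnull]) (auto simp: B_def)
qed


end
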